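(* For every $e\in\mathtt{CA}$ and all $c,d\in\mathtt{CA}$, \[\delta(e\circ c,e\circ d)\le(2r(e)+1)\,\delta(c,d).\] In particular, $c\mapsto e\circ c$ is Lipschitz continuous on $(\mathtt{CA},\delta)$.
   Context: $\Sigma$ is a finite alphabet with $|\Sigma|\ge2$. For $r\in\mathbb{N}$, $N(r)=[-r,r]$. A cellular automaton (CA) is a map $c:\Sigma^\mathbb{Z}\to\Sigma^\mathbb{Z}$ of the form $c(x)_i=F(x_{[i-r,i+r]})$ for some local function $F:\Sigma^{N(r)}\to\Sigma$; any such $r$ is a radius and $r(c)$ denotes the minimal radius. $\mathtt{CA}$ is the set of all CA. For $c,d\in\mathtt{CA}$ with common radius $r$, $D^c_d=\{w\in\Sigma^{N(r)}\mid$ the local rules of $c$ and $d$ give different outputs on $w\}$ (equivalently, $c(x)_0\neq d(x)_0$ for $x_{[-r,r]}=w$), and $\delta(c,d)=|D^c_d|/|\Sigma|^{2r+1}$, independent of $r$. *)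

theory Defs
  imports Complex_Main "HOL-Library.FuncSet"
begin

type_synonym 'a config = "int \<Rightarrow> 'a"

definition nbhd :: "nat \<Rightarrow> int set" where
  "nbhd r = {- int r .. int r}"

definition is_radius :: "('a config \<Rightarrow> 'a config) \<Rightarrow> nat \<Rightarrow> bool" where
  "is_radius c r \<longleftrightarrow>
     (\<exists>F :: (int \<Rightarrow> 'a) \<Rightarrow> 'a. \<forall>x i. c x i = F (restrict (\<lambda>j. x (i + j)) (nbhd r)))"

definition is_CA :: "('a config \<Rightarrow> 'a config) \<Rightarrow> bool" where
  "is_CA c \<longleftrightarrow> (\<exists>r. is_radius c r)"

definition min_radius :: "('a config \<Rightarrow> 'a config) \<Rightarrow> nat" where
  "min_radius c = (LEAST r. is_radius c r)"

text \<open>A configuration extending a pattern w on N(r) (arbitrary outside).\<close>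
definition extend :: "(int \<Rightarrow> 'a) \<Rightarrow> 'a config" where
  "extend w = w"

definition diff_set :: "nat \<Rightarrow> ('a config \<Rightarrow> 'a config) \<Rightarrow> ('a config \<Rightarrow> 'a config) \<Rightarrow> (int \<Rightarrow> 'a) set" where
  "diff_set r c d = {w \<in> PiE (nbhd r) (\<lambda>_. UNIV). c (extend w) 0 \<noteq> d (extend w) 0}"

definition delta :: "('a::finite config \<Rightarrow> 'a config) \<Rightarrow> ('a config \<Rightarrow> 'a config) \<Rightarrow> real" where
  "delta c d = (let r = max (min_radius c) (min_radius d) in
     real (card (diff_set r c d)) / (real (card (UNIV :: 'a set))) ^ (2 * r + 1))"

end

theory Submission
  imports Defs
begin

definition dep :: "int set \<Rightarrow> ('a config \<Rightarrow> bool) \<Rightarrow> bool" where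
  "dep A g \<longleftrightarrow> (\<forall>x y. (\<forall>j\<in>A. x j = y j) \<longrightarrow> g x = g y)"

definition cnt :: "int set \<Rightarrow> ('a config \<Rightarrow> bool) \<Rightarrow> nat" where
  "cnt W g = card {w \<in> PiE W (\<lambda>_. UNIV). g w}"

lemma cnt_insert:
  fixes g :: "'a::finite config \<Rightarrow> bool"
  assumes "a \<notin> W" "finite W" "dep W g"
  shows "cnt (insert a W) g = card (UNIV::'a set) * cnt W g"
proof -
  have gu: "g (f(a:=y)) = g f" for f y
    using assms(1,3) unfolding dep_def by (metis fun_upd_other)
  have eq: "{w \<in> PiE (insert a W) (\<lambda>_. UNIV). g w}
      = (\<lambda>(y, f). f(a := y)) ` (UNIV \<times> {f \<in> PiE W (\<lambda>_. UNIV). g f})"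
    unfolding PiE_insert_eq using gu by auto
  have inj: "inj_on (\<lambda>(y, f). f(a := y)) (UNIV \<times> {f \<in> PiE W (\<lambda>_. UNIV::'a set). g f})"
    by (rule inj_on_subset[OF inj_combinator[OF assms(1), of "\<lambda>_. UNIV"]]) auto
  show ?thesis unfolding cnt_def eq card_image[OF inj] card_cartesian_product by simp
qed

lemma dep_mono: "dep A g \<Longrightarrow> A \<subseteq> B \<Longrightarrow> dep B g"
  unfolding dep_def by blast

lemma cnt_extend:
  fixes g :: "'a::finite config \<Rightarrow> bool"
  assumes "finite B" "finite A" "dep A g"
  shows "cnt (A \<union> B) g = card (UNIV::'a set) ^ card (B - A) * cnt A g"
  using assms(1)
proof (induction B rule: finite_induct)
  case empty
  then show ?case by simp
next
  case (insert b B)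
  show ?case
  proof (cases "b \<in> A")
    case True
    then have "A \<union> insert b B = A \<union> B" "insert b B - A = B - A" by auto
    then show ?thesis using insert by simp
  next
    case False
    then have e: "A \<union> insert b B = insert b (A \<union> B)" "insert b B - A = insert b (B - A)"
      and nb: "b \<notin> A \<union> B" "b \<notin> B - A" using insert by auto
    have "cnt (insert b (A \<union> B)) g = card (UNIV::'a set) * cnt (A \<union> B) g"
      using nb insert assms by (intro cnt_insert) (auto intro: dep_mono[OF assms(3)])
    then show ?thesis unfolding e using insert nb by simp
  qed
qed

definition frac :: "int set \<Rightarrow> ('a::finite config \<Rightarrow> bool) \<Rightarrow> real" where
  "frac W g = real (cnt W g) / real (card (UNIV::'a set)) ^ card W"

lemma frac_extend:
  fixes g :: "'a::finite config \<Rightarrow> bool"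
  assumes "finite W" "A \<subseteq> W" "dep A g"
  shows "frac W g = frac A g"
proof -
  have fA: "finite A" using assms finite_subset by blast
  have W: "W = A \<union> (W - A)" using assms by auto
  have c: "card W = card A + card (W - A)"
    using assms fA by (metis W card_Un_disjoint Diff_disjoint finite_Diff)
  have "cnt W g = card (UNIV::'a set) ^ card (W - A) * cnt A g"
    using cnt_extend[OF _ fA assms(3), of "W - A"] assms W by (metis Diff_Diff_Int Int_absorb2 finite_Diff Un_Diff_cancel Diff_idemp)
  moreover have "real (card (UNIV::'a set)) > 0" by (simp add: finite_UNIV_card_ge_0)
  ultimately show ?thesis unfolding frac_def c by (simp add: power_add)
qed

lemma cnt_shift:
  fixes g :: "'a::finite config \<Rightarrow> bool"
  assumes "dep A g"
  shows "cnt ((+) i ` A) (\<lambda>x. g (\<lambda>j. x (i + j))) = cnt A g"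
proof -
  let ?f = "\<lambda>w::'a config. restrict (\<lambda>j. w (i + j)) A"
  let ?f' = "\<lambda>u::'a config. restrict (\<lambda>j. u (j - i)) ((+) i ` A)"
  have gd: "g (\<lambda>j. w (i + j)) = g (?f w)" for w
    using assms unfolding dep_def by auto
  have "bij_betw ?f {w \<in> PiE ((+) i ` A) (\<lambda>_. UNIV). g (\<lambda>j. w (i + j))} {u \<in> PiE A (\<lambda>_. UNIV). g u}"
  proof (rule bij_betw_byWitness[where f'="?f'"])
    show "\<forall>a\<in>{w \<in> PiE ((+) i ` A) (\<lambda>_. UNIV). g (\<lambda>j. w (i + j))}. ?f' (?f a) = a"
      by (auto simp: PiE_def extensional_def fun_eq_iff)
    show "\<forall>a\<in>{u \<in> PiE A (\<lambda>_. UNIV). g u}. ?f (?f' a) = a"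
      by (auto simp: PiE_def extensional_def fun_eq_iff)
    show "?f ` {w \<in> PiE ((+) i ` A) (\<lambda>_. UNIV). g (\<lambda>j. w (i + j))} \<subseteq> {u \<in> PiE A (\<lambda>_. UNIV). g u}"
      using gd by auto
    have "?f (?f' u) = u" if "u \<in> PiE A (\<lambda>_. UNIV)" for u
      using that by (auto simp: PiE_def extensional_def fun_eq_iff)
    then show "?f' ` {u \<in> PiE A (\<lambda>_. UNIV). g u} \<subseteq> {w \<in> PiE ((+) i ` A) (\<lambda>_. UNIV). g (\<lambda>j. w (i + j))}"
      using gd by (auto simp: PiE_def extensional_def)
  qed
  then show ?thesis unfolding cnt_def by (rule bij_betw_same_card)
qed

lemma frac_shift:
  fixes g :: "'a::finite config \<Rightarrow> bool"
  assumes "dep A g"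
  shows "frac ((+) i ` A) (\<lambda>x. g (\<lambda>j. x (i + j))) = frac A g"
  unfolding frac_def cnt_shift[OF assms] by (simp add: card_image)

lemma frac_union:
  fixes g :: "int \<Rightarrow> 'a::finite config \<Rightarrow> bool"
  assumes "finite I" "finite W" "\<And>x. h x \<Longrightarrow> \<exists>i\<in>I. g i x"
  shows "frac W h \<le> (\<Sum>i\<in>I. frac W (g i))"
proof -
  have "{w \<in> PiE W (\<lambda>_. UNIV). h w} \<subseteq> (\<Union>i\<in>I. {w \<in> PiE W (\<lambda>_. UNIV). g i w})"
    using assms(3) by auto
  then have "cnt W h \<le> card (\<Union>i\<in>I. {w \<in> PiE W (\<lambda>_. UNIV). g i w})"
    unfolding cnt_def by (intro card_mono) (use assms in \<open>auto intro!: finite_PiE finite_subset[OF _ finite_PiE[of W "\<lambda>_. UNIV::'a set"]]\<close>)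
  also have "\<dots> \<le> (\<Sum>i\<in>I. cnt W (g i))"
    unfolding cnt_def by (rule card_UN_le[OF assms(1)])
  finally have "real (cnt W h) \<le> (\<Sum>i\<in>I. real (cnt W (g i)))"
    by (metis of_nat_le_iff of_nat_sum)
  then show ?thesis unfolding frac_def sum_divide_distrib[symmetric]
    by (intro divide_right_mono) auto
qed

lemma radius_local:
  assumes "is_radius c r" "\<forall>j\<in>nbhd r. x (i + j) = y (i + j)"
  shows "c x i = c y i"
proof -
  obtain F where F: "\<forall>x i. c x i = F (restrict (\<lambda>j. x (i + j)) (nbhd r))"
    using assms(1) unfolding is_radius_def by blast
  have "restrict (\<lambda>j. x (i + j)) (nbhd r) = restrict (\<lambda>j. y (i + j)) (nbhd r)"
    using assms(2) by (auto simp: fun_eq_iff)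
  then show ?thesis using F by metis
qed

lemma radius_shift:
  assumes "is_radius c r"
  shows "c x i = c (\<lambda>j. x (i + j)) 0"
proof -
  obtain F where F: "\<forall>x i. c x i = F (restrict (\<lambda>j. x (i + j)) (nbhd r))"
    using assms(1) unfolding is_radius_def by blast
  then show ?thesis by simp
qed

lemma radius_mono:
  assumes "is_radius c r" "r \<le> s"
  shows "is_radius c s"
proof -
  obtain F where F: "\<forall>x i. c x i = F (restrict (\<lambda>j. x (i + j)) (nbhd r))"
    using assms(1) unfolding is_radius_def by blast
  have sub: "nbhd r \<subseteq> nbhd s" using assms(2) by (auto simp: nbhd_def)
  have "c x i = F (restrict (restrict (\<lambda>j. x (i + j)) (nbhd s)) (nbhd r))" for x i
    using F sub by (metis restrict_restrict inf.absorb2)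
  then show ?thesis unfolding is_radius_def by (intro exI[of _ "\<lambda>p. F (restrict p (nbhd r))"]) simp
qed

lemma radius_comp:
  assumes "is_radius e a" "is_radius c b"
  shows "is_radius (e \<circ> c) (a + b)"
proof -
  obtain Fe where Fe: "\<forall>x i. e x i = Fe (restrict (\<lambda>j. x (i + j)) (nbhd a))"
    using assms(1) unfolding is_radius_def by blast
  obtain Fc where Fc: "\<forall>x i. c x i = Fc (restrict (\<lambda>j. x (i + j)) (nbhd b))"
    using assms(2) unfolding is_radius_def by blast
  define F where "F p = Fe (restrict (\<lambda>j. Fc (restrict (\<lambda>k. p (j + k)) (nbhd b))) (nbhd a))" for p
  have "(e \<circ> c) x i = F (restrict (\<lambda>j. x (i + j)) (nbhd (a + b)))" for x i
  proof -
    have "restrict (\<lambda>j. c x (i + j)) (nbhd a) =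
      restrict (\<lambda>j. Fc (restrict (\<lambda>k. restrict (\<lambda>j. x (i + j)) (nbhd (a + b)) (j + k)) (nbhd b))) (nbhd a)"
    proof (rule ext)
      fix j
      show "restrict (\<lambda>j. c x (i + j)) (nbhd a) j =
        restrict (\<lambda>j. Fc (restrict (\<lambda>k. restrict (\<lambda>j. x (i + j)) (nbhd (a + b)) (j + k)) (nbhd b))) (nbhd a) j"
      proof (cases "j \<in> nbhd a")
        case True
        have "restrict (\<lambda>k. x (i + j + k)) (nbhd b) =
            restrict (\<lambda>k. restrict (\<lambda>j. x (i + j)) (nbhd (a + b)) (j + k)) (nbhd b)"
          using True by (auto simp: fun_eq_iff nbhd_def add.assoc)
        then show ?thesis using True Fc by simp
      qed simp
    qed
    then show ?thesis using Fe unfolding F_def by simp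
  qed
  then show ?thesis unfolding is_radius_def by blast
qed

lemma min_radius_is: "is_CA c \<Longrightarrow> is_radius c (min_radius c)"
  unfolding is_CA_def min_radius_def by (metis LeastI)

lemma min_radius_le: "is_radius c r \<Longrightarrow> min_radius c \<le> r"
  unfolding min_radius_def by (rule Least_le)

lemma dep_radius: "is_radius c r \<Longrightarrow> is_radius d r \<Longrightarrow> dep (nbhd r) (\<lambda>x. c x 0 \<noteq> d x 0)"
  unfolding dep_def using radius_local[of c r _ 0] radius_local[of d r _ 0] by force

lemma card_nbhd: "card (nbhd r) = 2 * r + 1"
  unfolding nbhd_def by simp

lemma delta_frac:
  fixes c :: "'a::finite config \<Rightarrow> 'a config"
  shows "delta c d = frac (nbhd (max (min_radius c) (min_radius d))) (\<lambda>x. c x 0 \<noteq> d x 0)"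
  unfolding delta_def frac_def cnt_def diff_set_def extend_def card_nbhd Let_def by simp

lemma dep_shift: "dep A g \<Longrightarrow> dep ((+) i ` A) (\<lambda>x. g (\<lambda>j. x (i + j)))"
  unfolding dep_def by (metis (no_types, lifting) image_eqI)

lemma main_ineq:
  fixes e c d :: "'a::finite config \<Rightarrow> 'a config"
  assumes "is_CA e" "is_CA c" "is_CA d"
  shows "delta (e \<circ> c) (e \<circ> d) \<le> (2 * real (min_radius e) + 1) * delta c d"
proof -
  define re where "re = min_radius e"
  define R0 where "R0 = max (min_radius c) (min_radius d)"
  define R where "R = re + R0"
  define R1 where "R1 = max (min_radius (e \<circ> c)) (min_radius (e \<circ> d))"
  have e: "is_radius e re" using min_radius_is[OF assms(1)] re_def by simp
  have c: "is_radius c R0" using min_radius_is[OF assms(2)] R0_def radius_mono by fastforce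
  have d: "is_radius d R0" using min_radius_is[OF assms(3)] R0_def radius_mono by fastforce
  have ec: "is_radius (e \<circ> c) R" and ed: "is_radius (e \<circ> d) R"
    using radius_comp[OF e c] radius_comp[OF e d] R_def by auto
  have "R1 \<le> R" using min_radius_le[OF ec] min_radius_le[OF ed] R1_def by simp
  have ec1: "is_radius (e \<circ> c) R1"
    using min_radius_is[of "e \<circ> c"] ec R1_def radius_mono is_CA_def by fastforce
  have ed1: "is_radius (e \<circ> d) R1"
    using min_radius_is[of "e \<circ> d"] ed R1_def radius_mono is_CA_def by fastforce
  define G where "G x = ((e \<circ> c) x 0 \<noteq> (e \<circ> d) x 0)" for x
  define H where "H i x = (c x i \<noteq> d x i)" for i x
  have sub1: "nbhd R1 \<subseteq> nbhd R" using \<open>R1 \<le> R\<close> by (auto simp: nbhd_def)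
  have fin: "finite (nbhd r)" for r by (simp add: nbhd_def)
  have "delta (e \<circ> c) (e \<circ> d) = frac (nbhd R1) G"
    unfolding delta_frac R1_def G_def ..
  also have "\<dots> = frac (nbhd R) G"
    using frac_extend[OF fin sub1 dep_radius[OF ec1 ed1]] G_def by (simp add: fun_eq_iff[symmetric] G_def[abs_def])
  also have "\<dots> \<le> (\<Sum>i\<in>nbhd re. frac (nbhd R) (H i))"
  proof (rule frac_union[OF fin fin])
    fix x assume "G x"
    show "\<exists>i\<in>nbhd re. H i x"
    proof (rule ccontr)
      assume "\<not> ?thesis"
      then have "\<forall>j\<in>nbhd re. c x (0 + j) = d x (0 + j)" unfolding H_def by simp
      then have "e (c x) 0 = e (d x) 0" by (rule radius_local[OF e])
      then show False using \<open>G x\<close> G_def by simp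
    qed
  qed
  also have "\<dots> = (\<Sum>i\<in>nbhd re. delta c d)"
  proof (rule sum.cong[OF refl])
    fix i assume i: "i \<in> nbhd re"
    have dep0: "dep (nbhd R0) (H 0)" using dep_radius[OF c d] by (simp add: H_def[abs_def])
    have Hi: "H i = (\<lambda>x. H 0 (\<lambda>j. x (i + j)))"
      unfolding H_def using radius_shift[OF c] radius_shift[OF d] by (auto simp: fun_eq_iff)
    have sub: "(+) i ` nbhd R0 \<subseteq> nbhd R" using i by (auto simp: nbhd_def R_def)
    have "frac (nbhd R) (H i) = frac ((+) i ` nbhd R0) (\<lambda>x. H 0 (\<lambda>j. x (i + j)))"
      unfolding Hi by (rule frac_extend[OF fin sub dep_shift[OF dep0]])
    also have "\<dots> = frac (nbhd R0) (H 0)" by (rule frac_shift[OF dep0])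
    also have "\<dots> = delta c d" unfolding delta_frac R0_def H_def[abs_def] by simp
    finally show "frac (nbhd R) (H i) = delta c d" .
  qed
  also have "\<dots> = (2 * real (min_radius e) + 1) * delta c d"
    by (simp add: card_nbhd re_def)
  finally show ?thesis .
qed

theorem lemma4p1:
  fixes e :: "'a::finite config \<Rightarrow> 'a config"
  assumes "card (UNIV :: 'a set) \<ge> 2"
    and "is_CA e"
  shows "(\<forall>c d. is_CA c \<longrightarrow> is_CA d \<longrightarrow>
           delta (e \<circ> c) (e \<circ> d) \<le> (2 * real (min_radius e) + 1) * delta c d)
         \<and> (\<exists>L. \<forall>c d. is_CA c \<longrightarrow> is_CA d \<longrightarrow> delta (e \<circ> c) (e \<circ> d) \<le> L * delta c d)"
  using main_ineq[OF assms(2)] by blast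

end
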